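(* Let $H\ge1$, $c_a\ge0$, $c_R>0$, $\beta=c_a/c_R$. Consider two patients $j\in\{u,l\}$ with readmission probabilities $p^j_{h,0},p^j_{h,1}\in[0,1)$, $p^j_{h,0}\ge p^j_{h,1}$, $h=1,\dots,H$, and treatment effects $\Delta^j_h=p^j_{h,0}-p^j_{h,1}$. For each patient define $V^j_{H+1}=0$, $V^j_h=\min\{c_a+p^j_{h,1}c_R+(1-p^j_{h,1})V^j_{h+1},\ p^j_{h,0}c_R+(1-p^j_{h,0})V^j_{h+1}\}$, and the optimal action $a^{*,j}_h=1$ if $\Delta^j_h>\beta/(1-V^j_{h+1}/c_R)$ and $a^{*,j}_h=0$ otherwise. Suppose that for all $1\le h\le H$, $$\Delta^l_h-\Delta^u_h<\frac{\beta}{\prod_{i=h+1}^H(1-p^l_{i,1})}-\frac{\beta}{\prod_{i=h+1}^H(1-p^u_{i,0})}.$$ Then for every $1\le h\le H$, $a^{*,l}_h=1$ implies $a^{*,u}_h=1$.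
   Context: Empty products equal $1$. The action rule $a^{*,j}_h=1$ iff $\Delta^j_h>\beta/(1-V^j_{h+1}/c_R)$ is the optimal (cost-minimizing, ties broken toward no intervention) decision in the post-discharge MDP with intervention cost $c_a$ and readmission cost $c_R$. *)

theory Defs
  imports "HOL-Analysis.Analysis"
begin

text \<open>Value function of the post-discharge MDP. Vrem H ca cR p0 p1 n is the value
  V_{H+1-n}, i.e. with n periods remaining; Vrem ... 0 = V_{H+1} = 0.\<close>
fun Vrem :: "nat \<Rightarrow> real \<Rightarrow> real \<Rightarrow> (nat \<Rightarrow> real) \<Rightarrow> (nat \<Rightarrow> real) \<Rightarrow> nat \<Rightarrow> real" where
  "Vrem H ca cR p0 p1 0 = 0"
| "Vrem H ca cR p0 p1 (Suc n) =
     (let h = H - n; V' = Vrem H ca cR p0 p1 n in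
      min (ca + p1 h * cR + (1 - p1 h) * V') (p0 h * cR + (1 - p0 h) * V'))"

text \<open>V_h for 1 \<le> h \<le> H+1 (p0 h, p1 h = readmission probs without / with intervention).\<close>
definition Vval :: "nat \<Rightarrow> real \<Rightarrow> real \<Rightarrow> (nat \<Rightarrow> real) \<Rightarrow> (nat \<Rightarrow> real) \<Rightarrow> nat \<Rightarrow> real" where
  "Vval H ca cR p0 p1 h = Vrem H ca cR p0 p1 (H + 1 - h)"

definition opt_action :: "nat \<Rightarrow> real \<Rightarrow> real \<Rightarrow> (nat \<Rightarrow> real) \<Rightarrow> (nat \<Rightarrow> real) \<Rightarrow> nat \<Rightarrow> bool" where
  "opt_action H ca cR p0 p1 h \<longleftrightarrow>
     p0 h - p1 h > (ca / cR) / (1 - Vval H ca cR p0 p1 (h + 1) / cR)"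

end

theory Submission
  imports Defs
begin

lemma Wbounds:
  fixes cR ca :: real
  assumes cR: "cR > 0" and ca: "ca \<ge> 0"
  shows "n \<le> H \<Longrightarrow> (\<And>i. H - n < i \<Longrightarrow> i \<le> H \<Longrightarrow> 0 \<le> p1 i \<and> p1 i \<le> p0 i \<and> p0 i < 1) \<Longrightarrow>
    (\<Prod>i\<in>{H-n+1..H}. (1 - p0 i)) \<le> 1 - Vrem H ca cR p0 p1 n / cR \<and>
    1 - Vrem H ca cR p0 p1 n / cR \<le> (\<Prod>i\<in>{H-n+1..H}. (1 - p1 i)) \<and>
    0 < (\<Prod>i\<in>{H-n+1..H}. (1 - p0 i))"
proof (induction n)
  case 0
  then show ?case by simp
next
  case (Suc n)
  let ?h = "H - n"
  let ?V = "Vrem H ca cR p0 p1 n"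
  let ?W = "1 - ?V / cR"
  have IH: "(\<Prod>i\<in>{H-n+1..H}. (1 - p0 i)) \<le> ?W \<and> ?W \<le> (\<Prod>i\<in>{H-n+1..H}. (1 - p1 i))
     \<and> 0 < (\<Prod>i\<in>{H-n+1..H}. (1 - p0 i))"
    using Suc by auto
  have ph: "0 \<le> p1 ?h \<and> p1 ?h \<le> p0 ?h \<and> p0 ?h < 1" using Suc.prems by auto
  have set: "{H - Suc n + 1..H} = insert ?h {H-n+1..H}" using Suc.prems(1) by auto
  have P0: "(\<Prod>i\<in>{H - Suc n+1..H}. (1 - p0 i)) = (1 - p0 ?h) * (\<Prod>i\<in>{H-n+1..H}. (1 - p0 i))"
    unfolding set by (subst prod.insert) auto
  have P1: "(\<Prod>i\<in>{H - Suc n+1..H}. (1 - p1 i)) = (1 - p1 ?h) * (\<Prod>i\<in>{H-n+1..H}. (1 - p1 i))"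
    unfolding set by (subst prod.insert) auto
  have Weq: "1 - Vrem H ca cR p0 p1 (Suc n) / cR =
     max ((1 - p1 ?h) * ?W - ca / cR) ((1 - p0 ?h) * ?W)"
  proof -
    define A where "A = ca + p1 ?h * cR + (1 - p1 ?h) * ?V"
    define B where "B = p0 ?h * cR + (1 - p0 ?h) * ?V"
    have "Vrem H ca cR p0 p1 (Suc n) = min A B" by (simp add: Let_def A_def B_def)
    moreover have "1 - min A B / cR = max (1 - A / cR) (1 - B / cR)"
      using cR by (auto simp add: min_def max_def divide_right_mono divide_le_cancel)
    moreover have "1 - A / cR = (1 - p1 ?h) * ?W - ca / cR" using cR
      unfolding A_def by (simp add: field_simps)
    moreover have "1 - B / cR = (1 - p0 ?h) * ?W" using cR
      unfolding B_def by (simp add: field_simps)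
    ultimately show ?thesis by simp
  qed
  have W0: "?W \<ge> 0" using IH by linarith
  have "(1 - p0 ?h) * (\<Prod>i\<in>{H-n+1..H}. (1 - p0 i)) \<le> (1 - p0 ?h) * ?W"
    using IH ph by (intro mult_left_mono) auto
  moreover have "(1 - p1 ?h) * ?W \<le> (1 - p1 ?h) * (\<Prod>i\<in>{H-n+1..H}. (1 - p1 i))"
    using IH ph by (intro mult_left_mono) auto
  moreover have "(1 - p0 ?h) * ?W \<le> (1 - p1 ?h) * ?W" using ph W0 by (intro mult_right_mono) auto
  moreover have "ca / cR \<ge> 0" using ca cR by simp
  moreover have "0 < (1 - p0 ?h) * (\<Prod>i\<in>{H-n+1..H}. (1 - p0 i))" using IH ph by simp
  ultimately show ?case unfolding Weq P0 P1 by (smt (verit))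
qed

theorem mainTheorem5:
  fixes H :: nat and ca cR :: real
    and p0u p1u p0l p1l :: "nat \<Rightarrow> real"
  assumes "H \<ge> 1" and "ca \<ge> 0" and "cR > 0"
    and "\<And>h. 1 \<le> h \<Longrightarrow> h \<le> H \<Longrightarrow> 0 \<le> p0u h \<and> p0u h < 1 \<and> 0 \<le> p1u h \<and> p1u h < 1 \<and> p0u h \<ge> p1u h"
    and "\<And>h. 1 \<le> h \<Longrightarrow> h \<le> H \<Longrightarrow> 0 \<le> p0l h \<and> p0l h < 1 \<and> 0 \<le> p1l h \<and> p1l h < 1 \<and> p0l h \<ge> p1l h"
    and "\<And>h. 1 \<le> h \<Longrightarrow> h \<le> H \<Longrightarrow>
           (p0l h - p1l h) - (p0u h - p1u h)
             < (ca / cR) / (\<Prod>i\<in>{h+1..H}. (1 - p1l i)) - (ca / cR) / (\<Prod>i\<in>{h+1..H}. (1 - p0u i))"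
  shows "\<forall>h. 1 \<le> h \<and> h \<le> H \<longrightarrow>
           opt_action H ca cR p0l p1l h \<longrightarrow> opt_action H ca cR p0u p1u h"
proof (intro allI impI)
  fix h assume h: "1 \<le> h \<and> h \<le> H" and al: "opt_action H ca cR p0l p1l h"
  have e: "H + 1 - (h + 1) = H - h" by simp
  have e2: "H - (H - h) + 1 = h + 1" using h by simp
  have bu: "(\<Prod>i\<in>{h+1..H}. (1 - p0u i)) \<le> 1 - Vval H ca cR p0u p1u (h+1) / cR \<and>
    1 - Vval H ca cR p0u p1u (h+1) / cR \<le> (\<Prod>i\<in>{h+1..H}. (1 - p1u i)) \<and>
    0 < (\<Prod>i\<in>{h+1..H}. (1 - p0u i))"
    using Wbounds[OF assms(3,2), of "H - h" H p1u p0u] assms(4) h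
    unfolding Vval_def e e2 by force
  have bl: "(\<Prod>i\<in>{h+1..H}. (1 - p0l i)) \<le> 1 - Vval H ca cR p0l p1l (h+1) / cR \<and>
    1 - Vval H ca cR p0l p1l (h+1) / cR \<le> (\<Prod>i\<in>{h+1..H}. (1 - p1l i)) \<and>
    0 < (\<Prod>i\<in>{h+1..H}. (1 - p0l i))"
    using Wbounds[OF assms(3,2), of "H - h" H p1l p0l] assms(5) h
    unfolding Vval_def e e2 by force
  define Wu where "Wu = 1 - Vval H ca cR p0u p1u (h+1) / cR"
  define Wl where "Wl = 1 - Vval H ca cR p0l p1l (h+1) / cR"
  define Pu where "Pu = (\<Prod>i\<in>{h+1..H}. (1 - p0u i))"
  define Pl where "Pl = (\<Prod>i\<in>{h+1..H}. (1 - p1l i))"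
  define b where "b = ca / cR"
  have b0: "b \<ge> 0" using assms(2,3) b_def by simp
  have Wl0: "0 < Wl" using bl Wl_def by linarith
  have Wu0: "0 < Pu" "Pu \<le> Wu" using bu Wu_def Pu_def by auto
  have "Wl \<le> Pl" using bl Wl_def Pl_def by auto
  have t1: "b / Pl \<le> b / Wl" using b0 Wl0 \<open>Wl \<le> Pl\<close> by (intro divide_left_mono) auto
  have t2: "b / Wu \<le> b / Pu" using b0 Wu0 by (intro divide_left_mono) auto
  have A: "p0l h - p1l h > b / Wl" using al unfolding opt_action_def Wl_def b_def .
  have C: "(p0l h - p1l h) - (p0u h - p1u h) < b / Pl - b / Pu"
    using assms(6) h unfolding b_def Pl_def Pu_def by auto
  have "p0u h - p1u h > b / Wu" using A C t1 t2 by linarith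
  then show "opt_action H ca cR p0u p1u h" unfolding opt_action_def Wu_def b_def .
qed

end
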